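(* Let $J,M$ be natural numbers. Let $\mathcal N\subset\mathbb N$ be a subset such that for each $m\in\mathbb N$ there is some $n\in\mathcal N$ divisible by $m$. Let $a_{j,i}\in\mathbb Z$ and $b_j\in\mathbb Z$ for $(j,i)\in\{1,\ldots,J\}\times\{1,\ldots,M\}$ be fixed integers. Suppose that for each $n\in\mathcal N$ there are integers $e_{i,n}$, $i\in\{1,\ldots,M\}$, such that $n$ divides $b_j-\sum_{i=1}^M a_{j,i}e_{i,n}$ for each $j\in\{1,\ldots,J\}$. Then there is some $n_0\in\mathcal N$ with the following property: for each $n\in\mathcal N$ divisible by $n_0$, there are integers $e'_{i,n}$, $i\in\{1,\ldots,M\}$, such that $\frac{n}{n_0}$ divides $e_{i,n}-e'_{i,n}$ for each $i$ and $b_j=\sum_{i=1}^M a_{j,i}e'_{i,n}$ for each $j$. *)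

theory Defs
  imports Main
begin

end

theory Submission imports Defs begin

definition rv :: "nat \<Rightarrow> (nat \<Rightarrow> int) \<Rightarrow> (nat \<Rightarrow> int) \<Rightarrow> int" where
  "rv M r z = (\<Sum>k=1..M. r k * z k)"
definition ap :: "nat \<Rightarrow> (nat \<Rightarrow> nat \<Rightarrow> int) \<Rightarrow> (nat \<Rightarrow> int) \<Rightarrow> nat \<Rightarrow> int" where
  "ap M P z i = (\<Sum>k=1..M. P i k * z k)"

lemma rv_ap: "rv M r (ap M P z) = rv M (\<lambda>k. \<Sum>i=1..M. r i * P i k) z"
  unfolding rv_def ap_def
  by (simp add: sum_distrib_left sum_distrib_right mult.assoc) (rule sum.swap)

lemma ap_ap: "ap M P (ap M p z) i = ap M (\<lambda>i k. \<Sum>l=1..M. P i l * p l k) z i"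
  unfolding ap_def
  by (simp add: sum_distrib_left sum_distrib_right mult.assoc) (rule sum.swap)

lemma rv_cong: "(\<And>k. k \<in> {1..M} \<Longrightarrow> z k = w k) \<Longrightarrow> rv M r z = rv M r w"
  unfolding rv_def by (rule sum.cong) auto

lemma ap_cong: "(\<And>k. k \<in> {1..M} \<Longrightarrow> z k = w k) \<Longrightarrow> ap M P z i = ap M P w i"
  unfolding ap_def by (rule sum.cong) auto

lemma rv_dvd: "(\<And>k. k \<in> {1..M} \<Longrightarrow> m dvd z k) \<Longrightarrow> m dvd rv M r z"
  unfolding rv_def by (rule dvd_sum) auto

lemma ap_dvd: "(\<And>k. k \<in> {1..M} \<Longrightarrow> m dvd z k) \<Longrightarrow> m dvd ap M P z i"
  unfolding ap_def by (rule dvd_sum) auto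

lemma rv_lin: "rv M r (\<lambda>k. u * z k - v * w k) = u * rv M r z - v * rv M r w"
  unfolding rv_def by (simp add: algebra_simps sum_subtractf sum_distrib_left)

lemma ap_lin: "ap M P (\<lambda>k. u * z k - v * w k) i = u * ap M P z i - v * ap M P w i"
  unfolding ap_def by (simp add: algebra_simps sum_subtractf sum_distrib_left)

lemma one_row: "\<exists>e p. e \<ge> 1 \<and> (\<forall>z. rv M s (ap M p z) = 0) \<and>
   (\<forall>m z. m dvd rv M s z \<longrightarrow> (\<forall>i\<in>{1..M}. m dvd e * z i - ap M p z i))"
proof (cases "\<forall>k\<in>{1..M}. s k = 0")
  case True
  have r0: "rv M s w = 0" for w unfolding rv_def using True by simp
  have a1: "ap M (\<lambda>i k. if i = k then 1 else 0) z i = z i" if "i \<in> {1..M}" for z i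
  proof -
    have "ap M (\<lambda>i k. if i = k then 1 else 0) z i = (\<Sum>k=1..M. if i = k then z k else 0)"
      unfolding ap_def by (rule sum.cong) auto
    then show ?thesis using that by simp
  qed
  show ?thesis
    by (rule exI[of _ 1], rule exI[of _ "\<lambda>i k. if i = k then 1 else 0"]) (simp add: r0 a1)
next
  case False
  then obtain i0 where i0: "i0 \<in> {1..M}" "s i0 \<noteq> 0" by auto
  define e where "e = \<bar>s i0\<bar>"
  define c where "c = (\<lambda>i::nat. if i = i0 then sgn (s i0) else 0)"
  define p where "p = (\<lambda>i k. (if i = k then e else 0) - c i * s k)"
  have apj: "ap M p z i = e * z i - c i * rv M s z" if "i \<in> {1..M}" for z i
  proof -
    have "ap M p z i = (\<Sum>k=1..M. (if i = k then e * z k else 0)) - c i * rv M s z"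
    proof -
      have "ap M p z i = (\<Sum>k=1..M. (if i = k then e * z k else 0) - c i * (s k * z k))"
        unfolding ap_def p_def by (rule sum.cong) (auto simp: algebra_simps)
      then show ?thesis unfolding rv_def by (simp add: sum_subtractf sum_distrib_left)
    qed
    also have "(\<Sum>k=1..M. (if i = k then e * z k else 0)) = e * z i"
      using that by simp
    finally show ?thesis .
  qed
  have sc: "(\<Sum>i=1..M. s i * c i) = e"
  proof -
    have "(\<Sum>i=1..M. s i * c i) = (\<Sum>i=1..M. if i = i0 then s i0 * sgn (s i0) else 0)"
      unfolding c_def by (rule sum.cong) auto
    also have "\<dots> = e" using i0 unfolding e_def by (simp add: abs_sgn mult.commute)
    finally show ?thesis .
  qed
  have r0: "rv M s (ap M p z) = 0" for z
  proof -
    have "rv M s (ap M p z) = rv M s (\<lambda>i. e * z i - c i * rv M s z)"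
      by (rule rv_cong) (simp add: apj)
    also have "\<dots> = e * rv M s z - (\<Sum>i=1..M. s i * c i) * rv M s z"
    proof -
      have g: "(\<Sum>i=1..M. s i * (e * z i - c i * R)) = e * rv M s z - (\<Sum>i=1..M. s i * c i) * R" for R
        unfolding rv_def by (simp add: algebra_simps sum_subtractf sum_distrib_left sum_distrib_right)
      show ?thesis using g[of "rv M s z"] by (simp add: rv_def[of M s "\<lambda>i. e * z i - c i * rv M s z"])
    qed
    also have "\<dots> = 0" using sc by simp
    finally show ?thesis .
  qed
  have "e \<ge> 1" using i0 unfolding e_def by simp
  moreover have "\<forall>m z. m dvd rv M s z \<longrightarrow> (\<forall>i\<in>{1..M}. m dvd e * z i - ap M p z i)"
    by (simp add: apj)
  ultimately show ?thesis using r0 by blast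
qed

lemma ap_id: "i \<in> {1..M} \<Longrightarrow> ap M (\<lambda>i k. if i = k then 1 else 0) z i = z i"
proof -
  have "ap M (\<lambda>i k. if i = k then 1 else 0) z i = (\<Sum>k=1..M. if i = k then z k else 0)"
    unfolding ap_def by (rule sum.cong) auto
  then show "i \<in> {1..M} \<Longrightarrow> ?thesis" by simp
qed

lemma key: fixes J :: nat shows "\<exists>d P. d \<ge> (1::int) \<and> (\<forall>j\<in>{1..J}. \<forall>z. rv M (a j) (ap M P z) = 0) \<and>
   (\<forall>m z. (\<forall>j\<in>{1..J}. m dvd rv M (a j) z) \<longrightarrow> (\<forall>i\<in>{1..M}. m dvd d * z i - ap M P z i))"
proof (induction J)
  case 0
  show ?case
    by (rule exI[of _ 1], rule exI[of _ "\<lambda>i k. if i = k then 1 else 0"]) (simp add: ap_id)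
next
  case (Suc J)
  then obtain d' P' where d': "d' \<ge> (1::int)" and k1: "\<forall>j\<in>{1..J}. \<forall>z. rv M (a j) (ap M P' z) = 0"
    and k2: "\<forall>m z. (\<forall>j\<in>{1..J}. m dvd rv M (a j) z) \<longrightarrow> (\<forall>i\<in>{1..M}. m dvd d' * z i - ap M P' z i)"
    by blast
  define r where "r = a (Suc J)"
  define s where "s = (\<lambda>k. \<Sum>i=1..M. r i * P' i k)"
  obtain e p where e: "e \<ge> 1" and o1: "\<forall>z. rv M s (ap M p z) = 0"
    and o2: "\<forall>m z. m dvd rv M s z \<longrightarrow> (\<forall>i\<in>{1..M}. m dvd e * z i - ap M p z i)"
    using one_row by blast
  define P where "P = (\<lambda>i k. \<Sum>l=1..M. P' i l * p l k)"
  have apP: "ap M P z = ap M P' (ap M p z)" for z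
    unfolding P_def by (rule ext) (simp add: ap_ap)
  have rs: "rv M r (ap M P' w) = rv M s w" for w unfolding s_def by (simp add: rv_ap)
  have c1: "\<forall>j\<in>{1..Suc J}. \<forall>z. rv M (a j) (ap M P z) = 0"
  proof (intro ballI allI)
    fix j z assume j: "j \<in> {1..Suc J}"
    show "rv M (a j) (ap M P z) = 0"
    proof (cases "j = Suc J")
      case True
      then show ?thesis using o1 rs by (simp add: apP r_def[symmetric])
    next
      case False
      then have "j \<in> {1..J}" using j by auto
      then show ?thesis using k1 by (simp add: apP)
    qed
  qed
  have c2: "\<forall>i\<in>{1..M}. m dvd (e * d') * z i - ap M P z i"
    if h: "\<forall>j\<in>{1..Suc J}. m dvd rv M (a j) z" for m z
  proof
    fix i assume i: "i \<in> {1..M}"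
    have h1: "\<forall>i\<in>{1..M}. m dvd d' * z i - ap M P' z i" using k2 h by auto
    have hr: "m dvd rv M r z" using h unfolding r_def by auto
    have "rv M s z = d' * rv M r z - 1 * rv M r (\<lambda>k. d' * z k - 1 * ap M P' z k)"
    proof -
      have "rv M r (\<lambda>k. d' * z k - 1 * ap M P' z k) = d' * rv M r z - 1 * rv M r (ap M P' z)"
        by (rule rv_lin)
      then show ?thesis by (simp add: rs[symmetric])
    qed
    moreover have "m dvd rv M r (\<lambda>k. d' * z k - 1 * ap M P' z k)"
      using h1 by (intro rv_dvd) auto
    ultimately have "m dvd rv M s z" using hr by simp
    then have h2: "\<forall>i\<in>{1..M}. m dvd e * z i - ap M p z i" using o2 by blast
    have "(e * d') * z i - ap M P z i = e * (d' * z i - ap M P' z i) + ap M P' (\<lambda>k. e * z k - 1 * ap M p z k) i"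
    proof -
      have "ap M P' (\<lambda>k. e * z k - 1 * ap M p z k) i = e * ap M P' z i - 1 * ap M P' (ap M p z) i"
        by (rule ap_lin)
      then show ?thesis unfolding apP by (simp add: algebra_simps)
    qed
    moreover have "m dvd ap M P' (\<lambda>k. e * z k - 1 * ap M p z k) i"
      using h2 by (intro ap_dvd) auto
    ultimately show "m dvd (e * d') * z i - ap M P z i" using h1 i by simp
  qed
  have "e * d' \<ge> 1" proof -
    have "1 * 1 \<le> e * d'" by (rule mult_mono) (use e d' in auto)
    then show ?thesis by simp
  qed
  then show ?case using c1 c2 by blast
qed

lemma rv_add: "rv M r (\<lambda>k. z k + w k) = rv M r z + rv M r w"
  unfolding rv_def by (simp add: algebra_simps sum.distrib)

lemma rv_scale: "rv M r (\<lambda>k. c * z k) = c * rv M r z"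
  unfolding rv_def by (simp add: algebra_simps sum_distrib_left)

lemma hom: fixes J :: nat shows "\<exists>d::int. d \<ge> 1 \<and> (\<forall>n z. (\<forall>j\<in>{1..J}. d*n dvd rv M (a j) z) \<longrightarrow>
   (\<exists>k. (\<forall>j\<in>{1..J}. rv M (a j) k = 0) \<and> (\<forall>i\<in>{1..M}. n dvd z i - k i)))"
proof -
  obtain d P where d: "d \<ge> (1::int)" and k1: "\<forall>j\<in>{1..J}. \<forall>z. rv M (a j) (ap M P z) = 0"
    and k2: "\<forall>m z. (\<forall>j\<in>{1..J}. m dvd rv M (a j) z) \<longrightarrow> (\<forall>i\<in>{1..M}. m dvd d * z i - ap M P z i)"
    using key[of J M a] by blast
  have "\<exists>k. (\<forall>j\<in>{1..J}. rv M (a j) k = 0) \<and> (\<forall>i\<in>{1..M}. n dvd z i - k i)"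
    if h: "\<forall>j\<in>{1..J}. d*n dvd rv M (a j) z" for n z
  proof -
    have h1: "\<forall>i\<in>{1..M}. d*n dvd d * z i - ap M P z i" using k2 h by blast
    define k where "k = (\<lambda>i. ap M P z i div d)"
    have dk: "ap M P z i = d * k i" if "i \<in> {1..M}" for i
    proof -
      have "d dvd d * z i - ap M P z i" using h1 that dvd_mult_left by blast
      moreover have "ap M P z i = d * z i - (d * z i - ap M P z i)" by simp
      ultimately have "d dvd ap M P z i" by (metis dvd_diff dvd_triv_left)
      then show ?thesis unfolding k_def by simp
    qed
    have "rv M (a j) k = 0" if "j \<in> {1..J}" for j
    proof -
      have "d * rv M (a j) k = rv M (a j) (\<lambda>i. d * k i)" by (rule rv_scale[symmetric])
      also have "\<dots> = rv M (a j) (ap M P z)" by (rule rv_cong) (simp add: dk)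
      finally have "d * rv M (a j) k = rv M (a j) (ap M P z)" .
      then show ?thesis using k1 that d by simp
    qed
    moreover have "n dvd z i - k i" if "i \<in> {1..M}" for i
    proof -
      have "d * z i - ap M P z i = d * (z i - k i)" using dk[OF that] by (simp add: algebra_simps)
      then have "d * n dvd d * (z i - k i)" using h1 that by metis
      then show ?thesis using d by simp
    qed
    ultimately show ?thesis by blast
  qed
  then show ?thesis using d by blast
qed

lemma exact:
  fixes J M :: nat and N :: "nat set" and a :: "nat \<Rightarrow> nat \<Rightarrow> int" and b :: "nat \<Rightarrow> int"
    and e :: "nat \<Rightarrow> nat \<Rightarrow> int"
  assumes cof: "\<And>m. m \<ge> 1 \<Longrightarrow> \<exists>n\<in>N. m dvd n"
    and sol: "\<And>n j. n \<in> N \<Longrightarrow> j \<in> {1..J} \<Longrightarrow> int n dvd (b j - rv M (a j) (\<lambda>i. e i n))"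
  shows "\<exists>x. \<forall>j\<in>{1..J}. rv M (a j) x = b j"
proof -
  define a' where "a' = (\<lambda>j i. if i = Suc M then - b j else a j i)"
  have ra: "rv (Suc M) (a' j) z = rv M (a j) z - b j * z (Suc M)" for j z
  proof -
    have "rv (Suc M) (a' j) z = rv M (a' j) z + a' j (Suc M) * z (Suc M)"
      unfolding rv_def by simp
    moreover have "rv M (a' j) z = rv M (a j) z"
      unfolding rv_def a'_def by (rule sum.cong) auto
    ultimately show ?thesis unfolding a'_def by simp
  qed
  obtain d1 where d1: "d1 \<ge> (1::int)" and hh: "\<forall>n z. (\<forall>j\<in>{1..J}. d1*n dvd rv (Suc M) (a' j) z) \<longrightarrow>
   (\<exists>k. (\<forall>j\<in>{1..J}. rv (Suc M) (a' j) k = 0) \<and> (\<forall>i\<in>{1..Suc M}. n dvd z i - k i))"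
    using hom[of J "Suc M" a'] by blast
  have G: "\<exists>k. (\<forall>j\<in>{1..J}. rv (Suc M) (a' j) k = 0) \<and> m dvd 1 - k (Suc M)"
    if m: "m \<ge> (1::int)" for m
  proof -
    have "1 * 1 \<le> d1 * m" by (rule mult_mono) (use d1 m in auto)
    then have "nat (d1 * m) \<ge> 1" by simp
    then obtain n where n: "n \<in> N" "nat (d1 * m) dvd n" using cof by blast
    have dm: "d1 * m dvd int n"
    proof -
      have "int (nat (d1 * m)) dvd int n" using n(2) by (simp only: int_dvd_int_iff)
      moreover have "int (nat (d1 * m)) = d1 * m" using d1 m by simp
      ultimately show ?thesis by simp
    qed
    define z where "z = (\<lambda>i. if i = Suc M then 1 else e i n)"
    have "d1 * m dvd rv (Suc M) (a' j) z" if j: "j \<in> {1..J}" for j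
    proof -
      have "rv M (a j) z = rv M (a j) (\<lambda>i. e i n)" by (rule rv_cong) (simp add: z_def)
      then have eqz: "rv (Suc M) (a' j) z = - (b j - rv M (a j) (\<lambda>i. e i n))"
        by (simp add: ra z_def)
      moreover have hs: "int n dvd (b j - rv M (a j) (\<lambda>i. e i n))" using sol n j by blast
      have "d1 * m dvd (b j - rv M (a j) (\<lambda>i. e i n))" by (rule dvd_trans[OF dm hs])
      then have "d1 * m dvd - (b j - rv M (a j) (\<lambda>i. e i n))" by (simp only: dvd_minus_iff)
      then show ?thesis by (simp only: eqz)
    qed
    then obtain k where k: "\<forall>j\<in>{1..J}. rv (Suc M) (a' j) k = 0" "\<forall>i\<in>{1..Suc M}. m dvd z i - k i"
      using hh by blast
    then have "m dvd z (Suc M) - k (Suc M)" by auto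
    then have "m dvd 1 - k (Suc M)" by (simp add: z_def)
    then show ?thesis using k by blast
  qed
  obtain k1 where k1: "\<forall>j\<in>{1..J}. rv (Suc M) (a' j) k1 = 0" "2 dvd 1 - k1 (Suc M)"
    using G[of 2] by auto
  define c1 where "c1 = k1 (Suc M)"
  have c1: "c1 \<noteq> 0" using k1(2) unfolding c1_def by auto
  obtain k2 where k2: "\<forall>j\<in>{1..J}. rv (Suc M) (a' j) k2 = 0" "\<bar>c1\<bar> dvd 1 - k2 (Suc M)"
  proof -
    have "1 \<le> \<bar>c1\<bar>" using c1 by simp
    from G[OF this] show ?thesis using that by blast
  qed
  define c2 where "c2 = k2 (Suc M)"
  have g: "gcd c1 c2 = 1"
  proof -
    have "gcd c1 c2 dvd \<bar>c1\<bar>" by simp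
    then have "gcd c1 c2 dvd 1 - c2" using k2(2) unfolding c2_def by (rule dvd_trans)
    moreover have "gcd c1 c2 dvd c2" by simp
    ultimately have "gcd c1 c2 dvd (1 - c2) + c2" by (rule dvd_add)
    then have "gcd c1 c2 dvd 1" by simp
    then show ?thesis by simp
  qed
  obtain u v where uv: "u * c1 + v * c2 = 1" using bezout_int[of c1 c2] g by auto
  define x where "x = (\<lambda>i. u * k1 i - (- v) * k2 i)"
  have "rv M (a j) x = b j" if j: "j \<in> {1..J}" for j
  proof -
    have "rv (Suc M) (a' j) x = u * rv (Suc M) (a' j) k1 - (- v) * rv (Suc M) (a' j) k2"
      unfolding x_def by (rule rv_lin)
    then have "rv (Suc M) (a' j) x = 0" using k1 k2 j by simp
    moreover have "x (Suc M) = 1" using uv unfolding x_def c1_def c2_def by simp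
    ultimately show ?thesis by (simp add: ra)
  qed
  then show ?thesis by blast
qed

theorem lemma10:
  fixes J M :: nat
    and N :: "nat set"
    and a :: "nat \<Rightarrow> nat \<Rightarrow> int"
    and b :: "nat \<Rightarrow> int"
    and e :: "nat \<Rightarrow> nat \<Rightarrow> int"
  assumes N_pos: "N \<subseteq> {1..}"
    and N_cofinal: "\<And>m. m \<ge> 1 \<Longrightarrow> \<exists>n\<in>N. m dvd n"
    and sol_mod: "\<And>n j. n \<in> N \<Longrightarrow> j \<in> {1..J} \<Longrightarrow>
        int n dvd (b j - (\<Sum>i=1..M. a j i * e i n))"
  shows "\<exists>n0\<in>N. \<forall>n\<in>N. n0 dvd n \<longrightarrow>
           (\<exists>e' :: nat \<Rightarrow> int.
              (\<forall>i\<in>{1..M}. int (n div n0) dvd (e i n - e' i)) \<and>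
              (\<forall>j\<in>{1..J}. b j = (\<Sum>i=1..M. a j i * e' i)))"
proof -
  have sol: "\<And>n j. n \<in> N \<Longrightarrow> j \<in> {1..J} \<Longrightarrow> int n dvd (b j - rv M (a j) (\<lambda>i. e i n))"
    using sol_mod unfolding rv_def by blast
  obtain x0 where x0: "\<forall>j\<in>{1..J}. rv M (a j) x0 = b j"
    using exact[where N=N and J=J and M=M and a=a and b=b and e=e, OF N_cofinal sol] by blast
  obtain d where d: "d \<ge> (1::int)" and hh: "\<forall>n z. (\<forall>j\<in>{1..J}. d*n dvd rv M (a j) z) \<longrightarrow>
   (\<exists>k. (\<forall>j\<in>{1..J}. rv M (a j) k = 0) \<and> (\<forall>i\<in>{1..M}. n dvd z i - k i))"
    using hom[of J M a] by blast
  have "nat d \<ge> 1" using d by simp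
  then obtain n0 where n0: "n0 \<in> N" "nat d dvd n0" using N_cofinal by blast
  have "\<exists>e' :: nat \<Rightarrow> int.
              (\<forall>i\<in>{1..M}. int (n div n0) dvd (e i n - e' i)) \<and>
              (\<forall>j\<in>{1..J}. b j = (\<Sum>i=1..M. a j i * e' i))"
    if n: "n \<in> N" "n0 dvd n" for n
  proof -
    obtain t where t: "n = n0 * t" using n(2) by blast
    obtain s where s: "n0 = nat d * s" using n0(2) by blast
    have npos: "n \<ge> 1" using N_pos n(1) by auto
    have dn: "d * int (s * t) = int n"
      using t s d by simp
    have q: "int (n div n0) dvd int (s * t)"
    proof -
      have "n0 \<noteq> 0" using npos t by auto
      then have "n div n0 = t" using t by simp
      then show ?thesis by simp
    qed
    define z where "z = (\<lambda>i. e i n - x0 i)"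
    have "d * int (s * t) dvd rv M (a j) z" if j: "j \<in> {1..J}" for j
    proof -
      have "rv M (a j) z = 1 * rv M (a j) (\<lambda>i. e i n) - 1 * rv M (a j) x0"
        unfolding z_def using rv_lin[of M "a j" 1 "\<lambda>i. e i n" 1 x0] by simp
      then have "rv M (a j) z = - (b j - rv M (a j) (\<lambda>i. e i n))" using x0 j by simp
      moreover have "int n dvd - (b j - rv M (a j) (\<lambda>i. e i n))"
        using sol[OF n(1) j] by (simp only: dvd_minus_iff)
      ultimately show ?thesis using dn by simp
    qed
    then obtain k where k: "\<forall>j\<in>{1..J}. rv M (a j) k = 0" "\<forall>i\<in>{1..M}. int (s * t) dvd z i - k i"
      using hh by blast
    define e' where "e' = (\<lambda>i. x0 i + k i)"
    have "\<forall>i\<in>{1..M}. int (n div n0) dvd (e i n - e' i)"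
    proof
      fix i assume "i \<in> {1..M}"
      then have "int (s * t) dvd e i n - e' i" using k(2) unfolding z_def e'_def
        by (simp add: algebra_simps)
      then show "int (n div n0) dvd (e i n - e' i)" using q by (rule dvd_trans[rotated])
    qed
    moreover have "\<forall>j\<in>{1..J}. b j = (\<Sum>i=1..M. a j i * e' i)"
    proof
      fix j assume j: "j \<in> {1..J}"
      have "rv M (a j) e' = rv M (a j) x0 + rv M (a j) k" unfolding e'_def by (rule rv_add)
      then show "b j = (\<Sum>i=1..M. a j i * e' i)" using x0 k(1) j unfolding rv_def by simp
    qed
    ultimately show ?thesis by blast
  qed
  then show ?thesis using n0(1) by blast
qed

end
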